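(* Let $t$ be an $\mathrm{SL}_2$-tiling with enough ones. Then there exist $(x_\alpha,y_\alpha)\in\mathbb{Z}\times\mathbb{Z}$ for $\alpha\in\mathbb{Z}$ such that: (i) $t_{xy}=1$ if and only if $(x,y)=(x_\alpha,y_\alpha)$ for some $\alpha$; (ii) for each $\alpha$, either (a) $x_{\alpha+1}<x_\alpha$ and $y_{\alpha+1}=y_\alpha$, or (b) $x_{\alpha+1}=x_\alpha$ and $y_{\alpha+1}>y_\alpha$; (iii) as $\alpha\to\infty$ and as $\alpha\to-\infty$, there are infinitely many switches between options (a) and (b). Moreover, the $(x_\alpha,y_\alpha)$ with these properties are unique up to replacing $\alpha$ by $\alpha+k$ for a constant integer $k$.
   Context: An $\mathrm{SL}_2$-tiling is a map $t:\mathbb{Z}\times\mathbb{Z}\to\{1,2,3,\dots\}$, $(i,j)\mapsto t_{ij}$, with $t_{ij}t_{i+1,j+1}-t_{i,j+1}t_{i+1,j}=1$ for all $i,j$. It has enough ones if for every $(i,j)$ there is $(p,q)$ with $p<i,\ q>j$ and $t_{pq}=1$, and there is $(p,q)$ with $p>i,\ q<j$ and $t_{pq}=1$. *)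

theory Defs
  imports Main
begin

definition sl2_tiling :: "(int \<Rightarrow> int \<Rightarrow> int) \<Rightarrow> bool" where
  "sl2_tiling t \<longleftrightarrow> (\<forall>i j. t i j \<ge> 1) \<and>
     (\<forall>i j. t i j * t (i+1) (j+1) - t i (j+1) * t (i+1) j = 1)"

definition enough_ones :: "(int \<Rightarrow> int \<Rightarrow> int) \<Rightarrow> bool" where
  "enough_ones t \<longleftrightarrow> (\<forall>i j.
     (\<exists>p q. p < i \<and> q > j \<and> t p q = 1) \<and>
     (\<exists>p q. p > i \<and> q < j \<and> t p q = 1))"

definition step_a :: "(int \<Rightarrow> int) \<Rightarrow> (int \<Rightarrow> int) \<Rightarrow> int \<Rightarrow> bool" where
  "step_a x y a \<longleftrightarrow> x (a+1) < x a \<and> y (a+1) = y a"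

definition step_b :: "(int \<Rightarrow> int) \<Rightarrow> (int \<Rightarrow> int) \<Rightarrow> int \<Rightarrow> bool" where
  "step_b x y a \<longleftrightarrow> x (a+1) = x a \<and> y (a+1) > y a"

definition switch_at :: "(int \<Rightarrow> int) \<Rightarrow> (int \<Rightarrow> int) \<Rightarrow> int \<Rightarrow> bool" where
  "switch_at x y a \<longleftrightarrow> (step_a x y a \<and> step_b x y (a+1)) \<or> (step_b x y a \<and> step_a x y (a+1))"

definition ones_param :: "(int \<Rightarrow> int \<Rightarrow> int) \<Rightarrow> (int \<Rightarrow> int) \<Rightarrow> (int \<Rightarrow> int) \<Rightarrow> bool" where
  "ones_param t x y \<longleftrightarrow>
     (\<forall>p q. t p q = 1 \<longleftrightarrow> (\<exists>a. p = x a \<and> q = y a)) \<and>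
     (\<forall>a. step_a x y a \<or> step_b x y a) \<and>
     (\<forall>N. \<exists>a\<ge>N. switch_at x y a) \<and>
     (\<forall>N. \<exists>a\<le>N. switch_at x y a)"

end

theory Submission
  imports Defs Complex_Main
begin

lemma ge_ind: fixes k i :: int assumes "k \<le> i" "P k" "\<And>i. k \<le> i \<Longrightarrow> P i \<Longrightarrow> P (i+1)" shows "P i"
  using int_ge_induct[of k i P] assms by blast

lemma le_ind: fixes k i :: int assumes "i \<le> k" "P k" "\<And>i. i \<le> k \<Longrightarrow> P i \<Longrightarrow> P (i-1)" shows "P i"
  using int_le_induct[of i k P] assms by blast

lemma chain_strict:
  fixes f :: "int \<Rightarrow> 'a::linorder"
  assumes "\<And>n. f n < f (n+1)" "a < b" shows "f a < f b"
proof -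
  have "a + 1 \<le> b" using assms(2) by simp
  then show ?thesis
  proof (induction b rule: int_ge_induct)
    case base then show ?case using assms(1) by simp
  next
    case (step i) then show ?case using assms(1)[of i] by (meson order.strict_trans)
  qed
qed

lemma chain_mono:
  fixes f :: "int \<Rightarrow> 'a::linorder"
  assumes "\<And>n. f n \<le> f (n+1)" "a \<le> b" shows "f a \<le> f b"
  using assms(2)
proof (induction b rule: int_ge_induct)
  case base then show ?case by simp
next
  case (step i) then show ?case using assms(1)[of i] by (meson order.trans)
qed

lemma tpos: "sl2_tiling t \<Longrightarrow> t i j \<ge> 1" by (simp add: sl2_tiling_def)
lemma tdet: "sl2_tiling t \<Longrightarrow> t i j * t (i+1) (j+1) - t i (j+1) * t (i+1) j = 1"
  by (simp add: sl2_tiling_def)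

lemma frac_iff:
  fixes a b c d :: int
  assumes "0 < b" "0 < d"
  shows "(real_of_int a / real_of_int b < real_of_int c / real_of_int d) = (a * d < c * b)"
proof -
  have "(real_of_int a / real_of_int b < real_of_int c / real_of_int d) =
        (real_of_int a * real_of_int d < real_of_int c * real_of_int b)"
    using assms by (simp add: divide_simps)
  also have "\<dots> = (a * d < c * b)" by (metis of_int_less_iff of_int_mult)
  finally show ?thesis .
qed

lemma gen_det:
  assumes T: "sl2_tiling t" and "i < k" "j < l"
  shows "t i l * t k j < t i j * t k l"
proof -
  have pos: "0 < t p q" for p q using tpos[OF T, of p q] by simp
  define r where "r p q = real_of_int (t (p+1) q) / real_of_int (t p q)" for p q
  have r1: "r p q < r p (q+1)" for p q
  proof -
    have "t p (q+1) * t (p+1) q < t p q * t (p+1) (q+1)" using tdet[OF T, of p q] by linarith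
    then show ?thesis unfolding r_def using frac_iff pos by (simp add: mult.commute)
  qed
  have rowi: "t p l * t (p+1) j < t p j * t (p+1) l" for p
  proof -
    have "r p j < r p l" by (rule chain_strict[where f="r p"]) (use r1 \<open>j<l\<close> in auto)
    then show ?thesis unfolding r_def using frac_iff pos by (simp add: mult.commute)
  qed
  define R where "R p = real_of_int (t p l) / real_of_int (t p j)" for p
  have R1: "R p < R (p+1)" for p
    unfolding R_def using frac_iff pos rowi[of p] by (simp add: mult.commute)
  have "R i < R k" by (rule chain_strict[where f=R]) (use R1 \<open>i<k\<close> in auto)
  then show ?thesis unfolding R_def using frac_iff pos by (simp add: mult.commute)
qed

lemma ones_chain:
  assumes T: "sl2_tiling t" and "t p q = 1" "t p' q' = 1" "p < p'" "q < q'"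
  shows False
proof -
  have "t p q' * t p' q < 1" using gen_det[OF T assms(4,5)] assms(2,3) by simp
  moreover have "1 \<le> t p q' * t p' q" using tpos[OF T, of p q'] tpos[OF T, of p' q]
    by (metis mult_le_cancel_left1 order.trans less_le_trans zero_less_one mult_1_right mult_left_mono zero_le_one)
  ultimately show False by simp
qed



lemma cell:
  fixes a b c d :: int
  assumes "a > b" "b \<ge> 1" "c \<ge> 1" "d \<ge> 1" "a*d - b*c = 1"
  shows "c > d \<or> d = 1"
proof (rule ccontr)
  assume "\<not> ?thesis"
  then have cd: "c \<le> d" "d \<ge> 2" using assms by auto
  have "b*c \<le> b*d" using cd assms by (simp add: mult_left_mono)
  moreover have "(a - b) * d \<ge> 1 * d" using assms cd by (intro mult_right_mono) auto
  moreover have "(a - b) * d = a*d - b*d" by (simp add: algebra_simps)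
  ultimately show False using assms cd by linarith
qed

lemma colconst:
  assumes T: "sl2_tiling t"
  shows "\<exists>c. \<forall>p. t p (q-1) + t p (q+1) = c * t p q"
proof -
  define C where "C p = t p (q-1) * t (p+1) (q+1) - t p (q+1) * t (p+1) (q-1)" for p
  have h1: "t p (q-1) * t (p+1) q - t p q * t (p+1) (q-1) = 1" for p
    using tdet[OF T, of p "q-1"] by simp
  have h2: "t p q * t (p+1) (q+1) - t p (q+1) * t (p+1) q = 1" for p
    using tdet[OF T, of p q] by simp
  have E1: "t p (q-1) + t p (q+1) = C p * t p q" for p
    using h1[of p] h2[of p] unfolding C_def by algebra
  have E2: "t (p+1) (q-1) + t (p+1) (q+1) = C p * t (p+1) q" for p
    using h1[of p] h2[of p] unfolding C_def by algebra
  have CC: "C (p+1) = C p" for p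
  proof -
    have "C (p+1) * t (p+1) q = C p * t (p+1) q" using E1[of "p+1"] E2[of p] by linarith
    moreover have "t (p+1) q \<noteq> 0" using tpos[OF T, of "p+1" q] by simp
    ultimately show ?thesis by simp
  qed
  have "C p = C 0" for p
  proof (induction p rule: int_induct[where k=0])
    case base then show ?case by simp
  next
    case (step1 i) then show ?case using CC[of i] by simp
  next
    case (step2 i) then show ?case using CC[of "i-1"] by simp
  qed
  then show ?thesis using E1 by metis
qed

lemma rect:
  fixes n :: nat
  assumes "sl2_tiling t" "k < i" "t i j = 1" "t k (j + int n) = 1" "0 < n"
  shows "\<exists>p q. k \<le> p \<and> p \<le> i \<and> j \<le> q \<and> q \<le> j + int n \<and> t p q = 1 \<and>
           (p,q) \<noteq> (i,j) \<and> (p,q) \<noteq> (k, j + int n)"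
  using assms
proof (induction n arbitrary: t rule: less_induct)
  case (less n t)
  define l where "l = j + int n"
  show ?case
  proof (rule ccontr)
    assume H0: "\<not> ?case"
    have H: "t p q \<noteq> 1" if "k \<le> p" "p \<le> i" "j \<le> q" "q \<le> l" "(p,q) \<noteq> (i,j)" "(p,q) \<noteq> (k,l)" for p q
      using H0 that l_def by blast
    have tl: "t k l = 1" using less l_def by simp
    have pos: "t p q \<ge> 1" for p q using tpos less.prems(1) by blast
    have jl: "j < l" using less.prems(5) l_def by simp
    have C1: "t p (l-1) > t p l" if "k \<le> p" "p \<le> i" for p
      using that
    proof (induction p rule: int_ge_induct)
      case base
      have "t k (l-1) \<noteq> 1" by (rule H) (use jl less.prems(2) in auto)
      then show ?case using pos[of k "l-1"] tl by simp
    next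
      case (step p)
      have d: "t p (l-1) * t (p+1) l - t p l * t (p+1) (l-1) = 1"
        using tdet[OF less.prems(1), of p "l-1"] by simp
      have ih: "t p (l-1) > t p l" using step by simp
      have "t (p+1) (l-1) > t (p+1) l \<or> t (p+1) l = 1"
        by (rule cell) (use ih pos d in auto)
      moreover have "t (p+1) l \<noteq> 1" by (rule H) (use step jl in auto)
      ultimately show ?case by simp
    qed
    have Ci: "t i (l-1) > t i l" using C1 less.prems(2) by simp
    show False
    proof (cases "\<forall>q. j < q \<and> q < l \<longrightarrow> t i (q-1) + t i (q+1) \<ge> 2 * t i q")
      case True
      have inc: "t i (q+1) > t i q" if "j \<le> q" "q < l" for q
        using that
      proof (induction q rule: int_ge_induct)
        case base
        have "t i (j+1) \<noteq> 1" by (rule H) (use jl less.prems(2) in auto)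
        then show ?case using pos[of i "j+1"] less.prems(3) by simp
      next
        case (step q)
        have h: "j < q+1 \<and> q+1 < l" using step by simp
        have "2 * t i (q+1) \<le> t i (q+1-1) + t i (q+1+1)" using True h by blast
        then show ?case using step by simp
      qed
      have "t i (l-1+1) > t i (l-1)" using inc[of "l-1"] jl by simp
      then show False using Ci by simp
    next
      case False
      then obtain q0 where q0: "j < q0" "q0 < l" "t i (q0-1) + t i (q0+1) < 2 * t i q0" by auto
      obtain c where c: "\<And>p. t p (q0-1) + t p (q0+1) = c * t p q0"
        using colconst[OF less.prems(1)] by blast
      have "c * t i q0 < 2 * t i q0" using c q0 by metis
      then have "c < 2" using pos[of i q0] by (simp add: mult_less_cancel_right)
      moreover have "c * t i q0 > 0" using c[of i] pos[of i "q0-1"] pos[of i "q0+1"] by linarith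
      then have "c > 0" using pos[of i q0] by (simp add: zero_less_mult_iff)
      ultimately have c1: "c = 1" by simp
      have sumr: "t p (q0+1) = t p q0 - t p (q0-1)" for p using c[of p] c1 by simp
      define t' where "t' p q = (if q < q0 then t p q else t p (q+1))" for p q
      have sl': "sl2_tiling t'"
        unfolding sl2_tiling_def
      proof (intro conjI allI)
        fix p q show "t' p q \<ge> 1" using pos by (simp add: t'_def)
      next
        fix p q
        show "t' p q * t' (p+1) (q+1) - t' p (q+1) * t' (p+1) q = 1"
        proof (cases "q+1 < q0")
          case True then show ?thesis using tdet[OF less.prems(1), of p q] by (simp add: t'_def)
        next
          case False
          show ?thesis
          proof (cases "q = q0 - 1")
            case True
            have d: "t p (q0-1) * t (p+1) q0 - t p q0 * t (p+1) (q0-1) = 1"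
              using tdet[OF less.prems(1), of p "q0-1"] by simp
            have e: "t' p q = t p (q0-1)" "t' (p+1) q = t (p+1) (q0-1)"
                "t' p (q+1) = t p (q0+1)" "t' (p+1) (q+1) = t (p+1) (q0+1)"
              using True by (simp_all add: t'_def)
            show ?thesis unfolding e sumr using d by algebra
          next
            case False
            with \<open>\<not> q+1 < q0\<close> have "q \<ge> q0" by simp
            then show ?thesis using tdet[OF less.prems(1), of p "q+1"] by (simp add: t'_def add.assoc)
          qed
        qed
      qed
      have n2: "int n \<ge> 2" using q0 l_def by simp
      obtain n' where n': "n = Suc n'" "0 < n'" using n2 by (cases n) auto
      have A: "t' i j = 1" using q0 less.prems(3) by (simp add: t'_def)
      have "j + int n' + 1 = l" using n' l_def by simp
      then have B: "t' k (j + int n') = 1" using q0 tl by (simp add: t'_def)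
      obtain p q where pq: "k \<le> p" "p \<le> i" "j \<le> q" "q \<le> j + int n'" "t' p q = 1"
          "(p,q) \<noteq> (i,j)" "(p,q) \<noteq> (k, j + int n')"
        using less.IH[of n' t', OF _ sl' less.prems(2) A B n'(2)] n' by auto
      show False
      proof (cases "q < q0")
        case True
        then show False using H[of p q] pq n' l_def q0 by (simp add: t'_def)
      next
        case False
        then show False using H[of p "q+1"] pq n' l_def q0 by (auto simp add: t'_def)
      qed
    qed
  qed
qed



definition nxt :: "int set \<Rightarrow> int \<Rightarrow> int" where
  "nxt S v = v + 1 + int (LEAST n. v + 1 + int n \<in> S)"
definition prv :: "int set \<Rightarrow> int \<Rightarrow> int" where
  "prv S v = v - 1 - int (LEAST n. v - 1 - int n \<in> S)"

locale unb =
  fixes S :: "int set"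
  assumes up: "\<And>v. \<exists>s\<in>S. v < s" and down: "\<And>v. \<exists>s\<in>S. s < v"
begin

lemma nxt_in: "nxt S v \<in> S"
proof -
  obtain s where s: "s \<in> S" "v < s" using up by blast
  have ex: "v + 1 + int (nat (s - v - 1)) \<in> S" using s by simp
  show ?thesis unfolding nxt_def by (rule LeastI[of _ "nat (s-v-1)"]) (use ex in simp)
qed

lemma nxt_gt: "v < nxt S v" unfolding nxt_def by simp

lemma nxt_min: "s \<in> S \<Longrightarrow> v < s \<Longrightarrow> nxt S v \<le> s"
proof -
  assume a: "s \<in> S" "v < s"
  then have "(LEAST n. v + 1 + int n \<in> S) \<le> nat (s - v - 1)" by (intro Least_le) simp
  then show ?thesis unfolding nxt_def using a by linarith
qed

lemma prv_in: "prv S v \<in> S"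
proof -
  obtain s where s: "s \<in> S" "s < v" using down by blast
  have ex: "v - 1 - int (nat (v - s - 1)) \<in> S" using s by simp
  show ?thesis unfolding prv_def by (rule LeastI[of _ "nat (v-s-1)"]) (use ex in simp)
qed

lemma prv_lt: "prv S v < v" unfolding prv_def by simp

lemma prv_max: "s \<in> S \<Longrightarrow> s < v \<Longrightarrow> s \<le> prv S v"
proof -
  assume a: "s \<in> S" "s < v"
  then have "(LEAST n. v - 1 - int n \<in> S) \<le> nat (v - s - 1)" by (intro Least_le) simp
  then show ?thesis unfolding prv_def using a by linarith
qed

lemma prv_nxt: "v \<in> S \<Longrightarrow> prv S (nxt S v) = v"
proof -
  assume v: "v \<in> S"
  have a: "v \<le> prv S (nxt S v)" using prv_max[OF v] nxt_gt[of v] by blast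
  have "\<not> v < prv S (nxt S v)"
  proof
    assume "v < prv S (nxt S v)"
    then have "nxt S v \<le> prv S (nxt S v)" using nxt_min prv_in by blast
    then show False using prv_lt[of "nxt S v"] by simp
  qed
  then show ?thesis using a by simp
qed

lemma nxt_prv: "v \<in> S \<Longrightarrow> nxt S (prv S v) = v"
proof -
  assume v: "v \<in> S"
  have a: "nxt S (prv S v) \<le> v" using nxt_min[OF v] prv_lt[of v] by blast
  have "\<not> nxt S (prv S v) < v"
  proof
    assume "nxt S (prv S v) < v"
    then have "nxt S (prv S v) \<le> prv S v" using prv_max nxt_in by blast
    then show False using nxt_gt[of "prv S v"] by simp
  qed
  then show ?thesis using a by simp
qed

lemma enum:
  assumes s0: "s0 \<in> S"
  shows "\<exists>f. (\<forall>a::int. f a \<in> S) \<and> (\<forall>a. f (a+1) = nxt S (f a)) \<and> (\<forall>v\<in>S. \<exists>a. f a = v)"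
proof -
  define f where "f a = (if 0 \<le> a then (nxt S ^^ nat a) s0 else (prv S ^^ nat (-a)) s0)" for a
  have inN: "(nxt S ^^ m) s0 \<in> S" for m by (induction m) (use s0 nxt_in in auto)
  have inP: "(prv S ^^ m) s0 \<in> S" for m by (induction m) (use s0 prv_in in auto)
  have fin: "f a \<in> S" for a unfolding f_def using inN inP by auto
  have fsuc: "f (a+1) = nxt S (f a)" for a
  proof (cases "0 \<le> a")
    case True
    then have "nat (a+1) = Suc (nat a)" by simp
    then show ?thesis unfolding f_def using True by simp
  next
    case False
    define m where "m = nat (-a-1)"
    have m1: "nat (-a) = Suc m" using False m_def by simp
    have fa: "f a = prv S ((prv S ^^ m) s0)" unfolding f_def using False m1 by simp
    have fa1: "f (a+1) = (prv S ^^ m) s0"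
    proof (cases "a + 1 = 0")
      case True then show ?thesis unfolding f_def m_def by simp
    next
      case False
      then show ?thesis unfolding f_def m_def using \<open>\<not> 0 \<le> a\<close> by (simp add: nat_diff_distrib)
    qed
    show ?thesis using fa fa1 nxt_prv inP by simp
  qed
  have fpred: "f (a-1) = prv S (f a)" for a
    using fsuc[of "a-1"] prv_nxt[OF fin[of "a-1"]] by simp
  have f0: "f 0 = s0" unfolding f_def by simp
  have surj1: "\<forall>v\<in>S. v - s0 \<le> int n \<longrightarrow> s0 \<le> v \<longrightarrow> (\<exists>a. f a = v)" for n
  proof (induction n)
    case 0
    show ?case
    proof (intro ballI impI)
      fix v assume "v \<in> S" "v - s0 \<le> int 0" "s0 \<le> v"
      then have "v = s0" by simp
      then have "f 0 = v" using f0 by simp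
      then show "\<exists>a. f a = v" by blast
    qed
  next
    case (Suc n)
    show ?case
    proof (intro ballI impI)
      fix v assume v: "v \<in> S" "v - s0 \<le> int (Suc n)" "s0 \<le> v"
      show "\<exists>a. f a = v"
      proof (cases "v = s0")
        case True then have "f 0 = v" using f0 by simp
        then show ?thesis by blast
      next
        case False
        let ?u = "prv S v"
        have "s0 < v" using v(3) False by simp
        then have u1: "s0 \<le> ?u" by (rule prv_max[OF s0])
        have "?u < v" by (rule prv_lt)
        have u3: "?u \<in> S" by (rule prv_in)
        have u4: "?u - s0 \<le> int n" using \<open>?u < v\<close> v(2) by linarith
        have "\<exists>a. f a = ?u" using Suc.IH u3 u1 u4 by simp
        then obtain a where "f a = ?u" by (elim exE)
        then have "f (a+1) = v" using fsuc[of a] nxt_prv[OF v(1)] by simp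
        then show ?thesis by blast
      qed
    qed
  qed
  have surj2: "\<forall>v\<in>S. s0 - v \<le> int n \<longrightarrow> v \<le> s0 \<longrightarrow> (\<exists>a. f a = v)" for n
  proof (induction n)
    case 0
    show ?case
    proof (intro ballI impI)
      fix v assume "v \<in> S" "s0 - v \<le> int 0" "v \<le> s0"
      then have "v = s0" by simp
      then have "f 0 = v" using f0 by simp
      then show "\<exists>a. f a = v" by blast
    qed
  next
    case (Suc n)
    show ?case
    proof (intro ballI impI)
      fix v assume v: "v \<in> S" "s0 - v \<le> int (Suc n)" "v \<le> s0"
      show "\<exists>a. f a = v"
      proof (cases "v = s0")
        case True then have "f 0 = v" using f0 by simp
        then show ?thesis by blast
      next
        case False
        let ?u = "nxt S v"
        have "v < s0" using v(3) False by simp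
        then have u1: "?u \<le> s0" by (rule nxt_min[OF s0])
        have "v < ?u" by (rule nxt_gt)
        have u3: "?u \<in> S" by (rule nxt_in)
        have u4: "s0 - ?u \<le> int n" using \<open>v < ?u\<close> v(2) by linarith
        have "\<exists>a. f a = ?u" using Suc.IH u3 u1 u4 by simp
        then obtain a where "f a = ?u" by (elim exE)
        then have "f (a-1) = v" using fpred[of a] prv_nxt[OF v(1)] by simp
        then show ?thesis by blast
      qed
    qed
  qed
  have "\<forall>v\<in>S. \<exists>a. f a = v"
  proof
    fix v assume v: "v \<in> S"
    show "\<exists>a. f a = v"
    proof (cases "s0 \<le> v")
      case True then show ?thesis using surj1[of "nat (v - s0)"] v by auto
    next
      case False then show ?thesis using surj2[of "nat (s0 - v)"] v by auto
    qed
  qed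
  note surjf = this
  have "(\<forall>a. f a \<in> S) \<and> (\<forall>a. f (a+1) = nxt S (f a)) \<and> (\<forall>v\<in>S. \<exists>a. f a = v)"
    using fin fsuc surjf by simp
  then show ?thesis by blast
qed

end



lemma same_weight:
  assumes T: "sl2_tiling t" and "t p q = 1" "t p' q' = 1" "q - p = q' - p'"
  shows "p = p' \<and> q = q'"
proof -
  have "\<not> p < p'"
  proof
    assume "p < p'" then have "q < q'" using assms(4) by linarith
    then show False using ones_chain[OF T assms(2,3) \<open>p < p'\<close>] by simp
  qed
  moreover have "\<not> p' < p"
  proof
    assume "p' < p" then have "q' < q" using assms(4) by linarith
    then show False using ones_chain[OF T assms(3,2) \<open>p' < p\<close>] by simp
  qed
  ultimately show ?thesis using assms(4) by simp
qed

lemma weight_order: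
  assumes T: "sl2_tiling t" and "t p q = 1" "t p' q' = 1" "q - p < q' - p'"
  shows "p' \<le> p \<and> q \<le> q'"
proof -
  have "\<not> p < p'"
  proof
    assume "p < p'" then have "q < q'" using assms(4) by linarith
    then show False using ones_chain[OF T assms(2,3) \<open>p < p'\<close>] by simp
  qed
  moreover have "\<not> q' < q"
  proof
    assume "q' < q" then have "p' < p" using assms(4) by linarith
    then show False using ones_chain[OF T assms(3,2) _ \<open>q' < q\<close>] by simp
  qed
  ultimately show ?thesis by simp
qed

theorem proposition8p2:
  fixes t :: "int \<Rightarrow> int \<Rightarrow> int"
  assumes "sl2_tiling t" and "enough_ones t"
  shows "\<exists>x y. ones_param t x y \<and>
           (\<forall>x' y'. ones_param t x' y' \<longrightarrow> (\<exists>k. \<forall>a. x' a = x (a+k) \<and> y' a = y (a+k)))"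
proof -
  note T = assms(1)
  have EO1: "\<exists>p q. p < i \<and> q > j \<and> t p q = 1" for i j
    using assms(2) unfolding enough_ones_def by blast
  have EO2: "\<exists>p q. p > i \<and> q < j \<and> t p q = 1" for i j
    using assms(2) unfolding enough_ones_def by blast
  define S where "S = {v. \<exists>p q. t p q = 1 \<and> q - p = v}"
  have upS: "\<exists>s\<in>S. v < s" for v
  proof -
    obtain p q where "p < 0" "q > v" "t p q = 1" using EO1 by blast
    then have "q - p \<in> S" "v < q - p" unfolding S_def by auto
    then show ?thesis by blast
  qed
  have downS: "\<exists>s\<in>S. s < v" for v
  proof -
    obtain p q where "p > 0" "q < v" "t p q = 1" using EO2 by blast
    then have "q - p \<in> S" "q - p < v" unfolding S_def by auto
    then show ?thesis by blast
  qed
  interpret U: unb S using upS downS by unfold_locales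
  obtain s0 where s0: "s0 \<in> S" using upS by blast
  obtain f :: "int \<Rightarrow> int" where f1: "\<And>a. f a \<in> S" and f2: "\<And>a. f (a+1) = nxt S (f a)"
      and f3: "\<And>v. v \<in> S \<Longrightarrow> \<exists>a. f a = v"
    using U.enum[OF s0] by blast
  define P where "P a = (SOME P. t (fst P) (snd P) = 1 \<and> snd P - fst P = f a)" for a
  define x where "x a = fst (P a)" for a
  define y where "y a = snd (P a)" for a
  have xy: "t (x a) (y a) = 1 \<and> y a - x a = f a" for a
  proof -
    have "\<exists>P. t (fst P) (snd P) = 1 \<and> snd P - fst P = f a" using f1[of a] unfolding S_def by auto
    then have "t (fst (P a)) (snd (P a)) = 1 \<and> snd (P a) - fst (P a) = f a"
      unfolding P_def by (rule someI_ex)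
    then show ?thesis unfolding x_def y_def by simp
  qed
  have one: "t (x a) (y a) = 1" for a using xy by blast
  have wt: "y a - x a = f a" for a using xy by blast
  have iff: "t p q = 1 \<longleftrightarrow> (\<exists>a. p = x a \<and> q = y a)" for p q
  proof
    assume h: "t p q = 1"
    then have "q - p \<in> S" unfolding S_def by auto
    then obtain a where "f a = q - p" using f3 by blast
    then have "p = x a \<and> q = y a" using same_weight[OF T h one[of a]] wt[of a] by simp
    then show "\<exists>a. p = x a \<and> q = y a" by blast
  next
    assume "\<exists>a. p = x a \<and> q = y a"
    then show "t p q = 1" using one by auto
  qed
  have stp: "step_a x y a \<or> step_b x y a" for a
  proof -
    have w: "f a < f (a+1)" using f2[of a] U.nxt_gt[of "f a"] by simp
    have ord: "x (a+1) \<le> x a \<and> y a \<le> y (a+1)"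
      using weight_order[OF T one[of a] one[of "a+1"]] w wt by simp
    have nb: "\<not> (x (a+1) < x a \<and> y a < y (a+1))"
    proof
      assume h: "x (a+1) < x a \<and> y a < y (a+1)"
      define n where "n = nat (y (a+1) - y a)"
      have n1: "y a + int n = y (a+1)" "0 < n" using h n_def by auto
      have o2: "t (x (a+1)) (y a + int n) = 1" using one[of "a+1"] n1 by simp
      obtain p q where R: "x (a+1) \<le> p" "p \<le> x a" "y a \<le> q" "q \<le> y a + int n" "t p q = 1"
          "(p,q) \<noteq> (x a, y a)" "(p,q) \<noteq> (x (a+1), y a + int n)"
        using rect[OF T _ one[of a] o2 n1(2)] h by blast
      have "q - p \<noteq> f a"
      proof
        assume "q - p = f a"
        then have "p = x a \<and> q = y a" using same_weight[OF T R(5) one[of a]] wt[of a] by simp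
        then show False using R(6) by simp
      qed
      moreover have "q - p \<noteq> f (a+1)"
      proof
        assume "q - p = f (a+1)"
        then have "p = x (a+1) \<and> q = y (a+1)" using same_weight[OF T R(5) one[of "a+1"]] wt[of "a+1"] by simp
        then show False using R(7) n1 by simp
      qed
      moreover have "f a \<le> q - p" "q - p \<le> f (a+1)" using R(1-4) n1 wt[of a] wt[of "a+1"] by linarith+
      ultimately have lt: "f a < q - p" "q - p < nxt S (f a)" using f2[of a] by auto
      have "q - p \<in> S" using R(5) unfolding S_def by auto
      then have "nxt S (f a) \<le> q - p" using U.nxt_min lt(1) by blast
      then show False using lt(2) by simp
    qed
    show ?thesis
    proof (cases "x (a+1) = x a")
      case True
      then have "y a < y (a+1)" using w wt[of a] wt[of "a+1"] by simp
      then show ?thesis using True unfolding step_b_def by simp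
    next
      case False
      then have "x (a+1) < x a" using ord by simp
      then have "y (a+1) = y a" using nb ord by simp
      then show ?thesis using \<open>x (a+1) < x a\<close> unfolding step_a_def by simp
    qed
  qed
  have excl: "\<not> (step_a x y a \<and> step_b x y a)" for a by (auto simp: step_a_def step_b_def)
  have xd: "x (a+1) \<le> x a" for a using stp[of a] by (auto simp: step_a_def step_b_def)
  have yi: "y a \<le> y (a+1)" for a using stp[of a] by (auto simp: step_a_def step_b_def)
  have ymono: "a \<le> b \<Longrightarrow> y a \<le> y b" for a b by (rule chain_mono[where f=y]) (use yi in auto)
  have xmono: "a \<le> b \<Longrightarrow> x b \<le> x a" for a b
  proof -
    assume "a \<le> b"
    have "- x a \<le> - x b" by (rule chain_mono[where f="\<lambda>a. - x a"]) (use xd \<open>a \<le> b\<close> in auto)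
    then show ?thesis by simp
  qed
  have swf: "\<forall>N. \<exists>a\<ge>N. switch_at x y a"
  proof (rule ccontr)
    assume "\<not> ?thesis"
    then obtain N where ns: "\<And>a. a \<ge> N \<Longrightarrow> \<not> switch_at x y a" by auto
    show False
    proof (cases "step_a x y N")
      case True
      have allA: "step_a x y a" if "N \<le> a" for a using that
      proof (induction a rule: int_ge_induct)
        case base then show ?case using True by simp
      next
        case (step a)
        have "\<not> step_b x y (a+1)" using ns[of a] step unfolding switch_at_def by auto
        then show ?case using stp[of "a+1"] by simp
      qed
      have yc: "y a = y N" if "N \<le> a" for a using that
      proof (induction a rule: int_ge_induct)
        case base then show ?case by simp
      next
        case (step a) then show ?case using allA[of a] unfolding step_a_def by simp
      qed
      obtain p q where pq: "p < x N" "q > y N" "t p q = 1" using EO1 by blast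
      then obtain b where b: "p = x b" "q = y b" using iff by blast
      show False
      proof (cases "N \<le> b")
        case True then show False using yc[of b] pq b by simp
      next
        case False then show False using ymono[of b N] pq b by simp
      qed
    next
      case False
      then have B: "step_b x y N" using stp by blast
      have allB: "step_b x y a" if "N \<le> a" for a using that
      proof (induction a rule: int_ge_induct)
        case base then show ?case using B by simp
      next
        case (step a)
        have "\<not> step_a x y (a+1)" using ns[of a] step unfolding switch_at_def by auto
        then show ?case using stp[of "a+1"] by simp
      qed
      have xc: "x a = x N" if "N \<le> a" for a using that
      proof (induction a rule: int_ge_induct)
        case base then show ?case by simp
      next
        case (step a) then show ?case using allB[of a] unfolding step_b_def by simp
      qed
      obtain p q where pq: "p < x N" "q > y N" "t p q = 1" using EO1 by blast
      then obtain b where b: "p = x b" "q = y b" using iff by blast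
      show False
      proof (cases "N \<le> b")
        case True then show False using xc[of b] pq b by simp
      next
        case False then show False using xmono[of b N] pq b by simp
      qed
    qed
  qed
  have swb: "\<forall>N. \<exists>a\<le>N. switch_at x y a"
  proof (rule ccontr)
    assume "\<not> ?thesis"
    then obtain N where ns: "\<And>a. a \<le> N \<Longrightarrow> \<not> switch_at x y a" by auto
    show False
    proof (cases "step_a x y N")
      case True
      have allA: "step_a x y a" if "a \<le> N" for a using that
      proof (induction a rule: int_le_induct)
        case base then show ?case using True by simp
      next
        case (step a)
        have "\<not> step_b x y (a-1)" using ns[of "a-1"] step unfolding switch_at_def by auto
        then show ?case using stp[of "a-1"] by simp
      qed
      have yc: "y a = y N" if "a \<le> N" for a using that
      proof (induction a rule: int_le_induct)
        case base then show ?case by simp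
      next
        case (step a) then show ?case using allA[of "a-1"] unfolding step_a_def by simp
      qed
      obtain p q where pq: "p > x N" "q < y N" "t p q = 1" using EO2 by blast
      then obtain b where b: "p = x b" "q = y b" using iff by blast
      show False
      proof (cases "b \<le> N")
        case True then show False using yc[of b] pq b by simp
      next
        case False then show False using ymono[of N b] pq b by simp
      qed
    next
      case False
      then have B: "step_b x y N" using stp by blast
      have allB: "step_b x y a" if "a \<le> N" for a using that
      proof (induction a rule: int_le_induct)
        case base then show ?case using B by simp
      next
        case (step a)
        have "\<not> step_a x y (a-1)" using ns[of "a-1"] step unfolding switch_at_def by auto
        then show ?case using stp[of "a-1"] by simp
      qed
      have xc: "x a = x N" if "a \<le> N" for a using that
      proof (induction a rule: int_le_induct)
        case base then show ?case by simp
      next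
        case (step a) then show ?case using allB[of "a-1"] unfolding step_b_def by simp
      qed
      obtain p q where pq: "p > x N" "q < y N" "t p q = 1" using EO2 by blast
      then obtain b where b: "p = x b" "q = y b" using iff by blast
      show False
      proof (cases "b \<le> N")
        case True then show False using xc[of b] pq b by simp
      next
        case False then show False using xmono[of N b] pq b by simp
      qed
    qed
  qed
  have op: "ones_param t x y"
    unfolding ones_param_def using iff stp swf swb by blast
  have uniq: "\<forall>x' y'. ones_param t x' y' \<longrightarrow> (\<exists>k. \<forall>a. x' a = x (a+k) \<and> y' a = y (a+k))"
  proof (intro allI impI)
    fix x' y' assume op': "ones_param t x' y'"
    then have i': "\<And>p q. t p q = 1 \<longleftrightarrow> (\<exists>a. p = x' a \<and> q = y' a)"
      and st': "\<And>a. step_a x' y' a \<or> step_b x' y' a" unfolding ones_param_def by blast+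
    define w where "w a = y' a - x' a" for a
    have one': "t (x' a) (y' a) = 1" for a using i' by blast
    have wS: "w a \<in> S" for a unfolding S_def w_def using one' by blast
    have winc: "w a < w (a+1)" for a using st'[of a] unfolding w_def step_a_def step_b_def by auto
    have wmono: "a < b \<Longrightarrow> w a < w b" for a b by (rule chain_strict[where f=w]) (use winc in auto)
    have wnext: "w (a+1) = nxt S (w a)" for a
    proof -
      have le: "nxt S (w a) \<le> w (a+1)" by (rule U.nxt_min[OF wS winc])
      have "\<not> nxt S (w a) < w (a+1)"
      proof
        assume h: "nxt S (w a) < w (a+1)"
        have "nxt S (w a) \<in> S" by (rule U.nxt_in)
        then obtain p q where pq: "t p q = 1" "q - p = nxt S (w a)" unfolding S_def by blast
        then obtain b where b: "p = x' b" "q = y' b" using i' by blast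
        have wb: "w b = nxt S (w a)" using pq b w_def by simp
        have g: "w a < w b" using wb U.nxt_gt by simp
        show False
        proof (cases "b \<le> a")
          case True
          then show False using g wmono[of b a] by (cases "b = a") auto
        next
          case False
          then have "a + 1 \<le> b" by simp
          then show False using h wb wmono[of "a+1" b] by (cases "a+1 = b") auto
        qed
      qed
      then show ?thesis using le by simp
    qed
    obtain k where k: "f k = w 0" using f3[OF wS[of 0]] by blast
    have wf: "w a = f (a + k)" for a
    proof (induction a rule: int_induct[where k=0])
      case base then show ?case using k by simp
    next
      case (step1 i)
      have "f (i + 1 + k) = nxt S (f (i + k))" using f2[of "i+k"] by (simp add: add.commute add.left_commute)
      then show ?case using wnext[of i] step1 by simp
    next
      case (step2 i)
      have a1: "w (i-1) = prv S (w i)" using wnext[of "i-1"] U.prv_nxt[OF wS[of "i-1"]] by simp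
      have a2: "f (i - 1 + k) = prv S (f (i + k))"
        using f2[of "i-1+k"] U.prv_nxt[OF f1[of "i-1+k"]] by simp
      show ?case using a1 a2 step2 by simp
    qed
    have "x' a = x (a+k) \<and> y' a = y (a+k)" for a
      using same_weight[OF T one'[of a] one[of "a+k"]] wf[of a] wt[of "a+k"] w_def by simp
    then show "\<exists>k. \<forall>a. x' a = x (a+k) \<and> y' a = y (a+k)" by blast
  qed
  show ?thesis using op uniq by blast
qed


end
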